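(* Let $A$ be a unital $C^*$-algebra such that $C(\mathbb T,A)$ has the cancellation property. Then $A$ is $K_1$-injective.
   Context: A $C^*$-algebra $B$ has cancellation of projections if for all projections $p,q,r\in B$ with $p\perp r$, $q\perp r$ and $p+r\sim q+r$ (Murray–von Neumann), one has $p\sim q$; $B$ has the cancellation property if $M_n(B)$ has cancellation of projections for every $n\ge1$. A unital $C^*$-algebra $A$ is $K_1$-injective if the natural map $\mathcal U(A)/\mathcal U^0(A)\to K_1(A)$ is injective, where $\mathcal U^0(A)$ is the connected component of $1$ in the unitary group $\mathcal U(A)$. *)

theory Defs
  imports "HOL-Analysis.Analysis"
begin

text \<open>A unital C*-algebra: a unital Banach algebra (over the reals, from the library)
together with a compatible complex scalar multiplication and an involution
satisfying the C*-identity.\<close>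

class cstar_algebra = real_normed_algebra_1 + banach +
  fixes cstar :: "'a \<Rightarrow> 'a"
    and cscale :: "complex \<Rightarrow> 'a \<Rightarrow> 'a"
  assumes cscale_of_real: "cscale (of_real r) x = scaleR r x"
    and cscale_add_left: "cscale (a + b) x = cscale a x + cscale b x"
    and cscale_add_right: "cscale a (x + y) = cscale a x + cscale a y"
    and cscale_mult_scalar: "cscale (a * b) x = cscale a (cscale b x)"
    and cscale_mult_left: "cscale a (x * y) = cscale a x * y"
    and cscale_mult_right: "cscale a (x * y) = x * cscale a y"
    and norm_cscale: "norm (cscale a x) = norm a * norm x"
    and cstar_cstar: "cstar (cstar x) = x"
    and cstar_add: "cstar (x + y) = cstar x + cstar y"
    and cstar_mult: "cstar (x * y) = cstar y * cstar x"
    and cstar_cscale: "cstar (cscale a x) = cscale (cnj a) (cstar x)"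
    and cstar_identity: "norm (cstar x * x) = norm x ^ 2"

definition mat :: "nat \<Rightarrow> (nat \<Rightarrow> nat \<Rightarrow> 'a::cstar_algebra) set" where
  "mat n = {M. \<forall>i j. (n \<le> i \<or> n \<le> j) \<longrightarrow> M i j = 0}"

definition mmul :: "nat \<Rightarrow> (nat \<Rightarrow> nat \<Rightarrow> 'a::cstar_algebra) \<Rightarrow> (nat \<Rightarrow> nat \<Rightarrow> 'a) \<Rightarrow> nat \<Rightarrow> nat \<Rightarrow> 'a" where
  "mmul n M N = (\<lambda>i j. if i < n \<and> j < n then (\<Sum>k<n. M i k * N k j) else 0)"

definition madd :: "(nat \<Rightarrow> nat \<Rightarrow> 'a::cstar_algebra) \<Rightarrow> (nat \<Rightarrow> nat \<Rightarrow> 'a) \<Rightarrow> nat \<Rightarrow> nat \<Rightarrow> 'a" where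
  "madd M N = (\<lambda>i j. M i j + N i j)"

definition mstar :: "(nat \<Rightarrow> nat \<Rightarrow> 'a::cstar_algebra) \<Rightarrow> nat \<Rightarrow> nat \<Rightarrow> 'a" where
  "mstar M = (\<lambda>i j. cstar (M j i))"

definition mone :: "nat \<Rightarrow> nat \<Rightarrow> nat \<Rightarrow> 'a::cstar_algebra" where
  "mone n = (\<lambda>i j. if i < n \<and> i = j then 1 else 0)"

definition munitary :: "nat \<Rightarrow> (nat \<Rightarrow> nat \<Rightarrow> 'a::cstar_algebra) \<Rightarrow> bool" where
  "munitary n U \<longleftrightarrow> U \<in> mat n \<and> mmul n (mstar U) U = mone n \<and> mmul n U (mstar U) = mone n"

text \<open>Homotopy of unitaries in U(M_n(A)). The (C*-)norm topology on M_n(A) coincides with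
the entrywise topology, so continuity of a path is entrywise continuity.\<close>

definition munitary_homotopic :: "nat \<Rightarrow> (nat \<Rightarrow> nat \<Rightarrow> 'a::cstar_algebra) \<Rightarrow> (nat \<Rightarrow> nat \<Rightarrow> 'a) \<Rightarrow> bool" where
  "munitary_homotopic n U V \<longleftrightarrow>
     (\<exists>\<gamma> :: real \<Rightarrow> nat \<Rightarrow> nat \<Rightarrow> 'a.
        (\<forall>i j. continuous_on {0..1} (\<lambda>t. \<gamma> t i j)) \<and>
        (\<forall>t\<in>{0..1}. munitary n (\<gamma> t)) \<and> \<gamma> 0 = U \<and> \<gamma> 1 = V)"

definition stab :: "'a::cstar_algebra \<Rightarrow> nat \<Rightarrow> nat \<Rightarrow> nat \<Rightarrow> 'a" where
  "stab u k = (\<lambda>i j. if i = 0 \<and> j = 0 then u else mone (Suc k) i j)"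

definition unitary_el :: "'a::cstar_algebra \<Rightarrow> bool" where
  "unitary_el u \<longleftrightarrow> cstar u * u = 1 \<and> u * cstar u = 1"

text \<open>U^0(A): the connected component of 1 in U(A) (equal to the path component
of 1, as U(A) is locally path connected).\<close>

definition U0 :: "'a::cstar_algebra set" where
  "U0 = {u. unitary_el u \<and> (\<exists>\<gamma> :: real \<Rightarrow> 'a. continuous_on {0..1} \<gamma> \<and>
            (\<forall>t\<in>{0..1}. unitary_el (\<gamma> t)) \<and> \<gamma> 0 = 1 \<and> \<gamma> 1 = u)}"

text \<open>[u] = [v] in K_1(A) (K_1(A) = U_\<infinity>(A)/~, stable homotopy), and
injectivity of U(A)/U^0(A) \<rightarrow> K_1(A): equal K_1-classes imply equal cosets.\<close>

definition K1_injective :: "'a::cstar_algebra itself \<Rightarrow> bool" where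
  "K1_injective _ \<longleftrightarrow>
     (\<forall>u v :: 'a. unitary_el u \<and> unitary_el v \<and>
        (\<exists>k. munitary_homotopic (Suc k) (stab u k) (stab v k))
        \<longrightarrow> cstar v * u \<in> U0)"

text \<open>M_n(C(T,A)) is identified (canonically) with C(T, M_n(A)): functions
on the complex plane, continuous on the unit circle T, with values in M_n(A),
normalised to be 0 off T. Operations are pointwise.\<close>

definition ctmat :: "nat \<Rightarrow> (complex \<Rightarrow> nat \<Rightarrow> nat \<Rightarrow> 'a::cstar_algebra) set" where
  "ctmat n = {F. (\<forall>i j. continuous_on (sphere 0 1) (\<lambda>z. F z i j)) \<and>
                 (\<forall>z. z \<notin> sphere 0 1 \<longrightarrow> F z = (\<lambda>i j. 0)) \<and>
                 (\<forall>z. F z \<in> mat n)}"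

definition ctmul :: "nat \<Rightarrow> (complex \<Rightarrow> nat \<Rightarrow> nat \<Rightarrow> 'a::cstar_algebra) \<Rightarrow> (complex \<Rightarrow> nat \<Rightarrow> nat \<Rightarrow> 'a) \<Rightarrow> complex \<Rightarrow> nat \<Rightarrow> nat \<Rightarrow> 'a" where
  "ctmul n F G = (\<lambda>z. mmul n (F z) (G z))"

definition ctadd :: "(complex \<Rightarrow> nat \<Rightarrow> nat \<Rightarrow> 'a::cstar_algebra) \<Rightarrow> (complex \<Rightarrow> nat \<Rightarrow> nat \<Rightarrow> 'a) \<Rightarrow> complex \<Rightarrow> nat \<Rightarrow> nat \<Rightarrow> 'a" where
  "ctadd F G = (\<lambda>z. madd (F z) (G z))"

definition ctstar :: "(complex \<Rightarrow> nat \<Rightarrow> nat \<Rightarrow> 'a::cstar_algebra) \<Rightarrow> complex \<Rightarrow> nat \<Rightarrow> nat \<Rightarrow> 'a" where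
  "ctstar F = (\<lambda>z. mstar (F z))"

definition ctzero :: "complex \<Rightarrow> nat \<Rightarrow> nat \<Rightarrow> 'a::cstar_algebra" where
  "ctzero = (\<lambda>z i j. 0)"

definition ctprojection :: "nat \<Rightarrow> (complex \<Rightarrow> nat \<Rightarrow> nat \<Rightarrow> 'a::cstar_algebra) \<Rightarrow> bool" where
  "ctprojection n P \<longleftrightarrow> P \<in> ctmat n \<and> ctstar P = P \<and> ctmul n P P = P"

definition ctmvn :: "nat \<Rightarrow> (complex \<Rightarrow> nat \<Rightarrow> nat \<Rightarrow> 'a::cstar_algebra) \<Rightarrow> (complex \<Rightarrow> nat \<Rightarrow> nat \<Rightarrow> 'a) \<Rightarrow> bool" where
  "ctmvn n P Q \<longleftrightarrow> (\<exists>V \<in> ctmat n. ctmul n (ctstar V) V = P \<and> ctmul n V (ctstar V) = Q)"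

definition ct_cancellation_n :: "'a::cstar_algebra itself \<Rightarrow> nat \<Rightarrow> bool" where
  "ct_cancellation_n _ n \<longleftrightarrow>
     (\<forall>P Q R :: complex \<Rightarrow> nat \<Rightarrow> nat \<Rightarrow> 'a.
        ctprojection n P \<and> ctprojection n Q \<and> ctprojection n R \<and>
        ctmul n P R = ctzero \<and> ctmul n Q R = ctzero \<and>
        ctmvn n (ctadd P R) (ctadd Q R) \<longrightarrow> ctmvn n P Q)"

definition CT_cancellation_property :: "'a::cstar_algebra itself \<Rightarrow> bool" where
  "CT_cancellation_property T \<longleftrightarrow> (\<forall>n\<ge>1. ct_cancellation_n T n)"

end

theory Submission
  imports Defs
begin


lemma cstar_zero[simp]: "cstar (0::'a::cstar_algebra) = 0"
  using cstar_add[of "0::'a" 0] by simp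

lemma cstar_minus: "cstar (- x) = - cstar (x::'a::cstar_algebra)"
  using cstar_add[of x "-x"] by (simp add: add_eq_0_iff2)

lemma cstar_diff: "cstar (x - y) = cstar x - cstar (y::'a::cstar_algebra)"
  using cstar_add[of x "-y"] by (simp add: cstar_minus)

lemma cstar_sum: "cstar (sum f A) = (\<Sum>i\<in>A. cstar (f i :: 'a::cstar_algebra))"
  by (induction A rule: infinite_finite_induct) (auto simp: cstar_add)

lemma cstar_one[simp]: "cstar (1::'a::cstar_algebra) = 1"
proof -
  have "cstar (cstar 1 * (1::'a)) = cstar 1 * cstar (cstar 1)" by (rule cstar_mult)
  then have "cstar (cstar (1::'a)) = cstar 1 * 1" by (simp add: cstar_cstar)
  then show ?thesis by (simp add: cstar_cstar)
qed

lemma norm_cstar_le: "norm (cstar x) \<le> norm (x::'a::cstar_algebra)"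
proof (cases "cstar x = 0")
  case True then show ?thesis by simp
next
  case False
  have "norm (cstar x) ^ 2 = norm (cstar (cstar x) * cstar x)" by (rule cstar_identity[symmetric])
  also have "\<dots> = norm (x * cstar x)" by (simp add: cstar_cstar)
  also have "\<dots> \<le> norm x * norm (cstar x)" by (rule norm_mult_ineq)
  finally have "norm (cstar x) * norm (cstar x) \<le> norm x * norm (cstar x)" by (simp add: power2_eq_square)
  then show ?thesis using False by simp
qed

lemma cstar_scaleR: "cstar (scaleR r x) = scaleR r (cstar (x::'a::cstar_algebra))"
  using cstar_cscale[of "of_real r" x] by (simp add: cscale_of_real)

lemma bounded_linear_cstar: "bounded_linear (cstar :: 'a::cstar_algebra \<Rightarrow> 'a)"
  by (rule bounded_linear_intro[where K=1]) (auto simp: cstar_add cstar_scaleR norm_cstar_le)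

lemma continuous_on_cstar[continuous_intros]:
  "continuous_on S f \<Longrightarrow> continuous_on S (\<lambda>t. cstar (f t :: 'a::cstar_algebra))"
  using bounded_linear.continuous_on[OF bounded_linear_cstar] by blast

lemma loop_circ:
  fixes g :: "real \<Rightarrow> 'b::real_normed_vector"
  assumes "continuous_on {0..1} g" "g 0 = g 1"
  shows "continuous_on (sphere 0 1) (\<lambda>z. g (Arg2pi z / (2*pi)))"
proof -
  have "homotopic_loops UNIV g g"
    using assms by (simp add: homotopic_loops_refl path_def pathfinish_def pathstart_def)
  from homotopic_loops_imp_homotopic_circlemaps[OF this]
  have "continuous_on (sphere 0 1) (g \<circ> (\<lambda>z. Arg2pi z / (2*pi)))"
    using homotopic_with_imp_continuous by blast
  then show ?thesis by (simp add: o_def)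
qed

lemma Arg_exp_param:
  assumes "0 \<le> t" "t \<le> (1::real)"
  shows "Arg2pi (exp (2 * of_real pi * of_real t * \<i>)) / (2*pi) = (if t = 1 then 0 else t)"
proof (cases "t = 1")
  case True
  have "exp (2 * of_real pi * \<i>) = (1::complex)"
    by (metis exp_two_pi_i mult.commute)
  then show ?thesis using True by (simp add: Arg2pi_eq_0)
next
  case False
  have "Arg2pi (exp (2 * of_real pi * of_real t * \<i>)) = 2 * pi * t"
    by (subst Arg2pi_exp) (use assms False in auto)
  then show ?thesis using False by simp
qed



lemma mmul_assoc: "mmul n (mmul n M N) L = mmul n M (mmul n N L)"
proof (intro ext)
  fix i j
  show "mmul n (mmul n M N) L i j = mmul n M (mmul n N L) i j"
  proof (cases "i < n \<and> j < n")
    case True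
    have "mmul n (mmul n M N) L i j = (\<Sum>q<n. (\<Sum>k<n. M i k * N k q) * L q j)"
      using True by (simp add: mmul_def)
    also have "\<dots> = (\<Sum>q<n. \<Sum>k<n. M i k * N k q * L q j)"
      by (simp add: sum_distrib_right)
    also have "\<dots> = (\<Sum>k<n. \<Sum>q<n. M i k * (N k q * L q j))"
      by (subst sum.swap) (simp add: mult.assoc)
    also have "\<dots> = mmul n M (mmul n N L) i j"
      using True by (simp add: mmul_def sum_distrib_left)
    finally show ?thesis .
  qed (auto simp: mmul_def)
qed

lemma sum_split_add: "(\<Sum>j<(m::nat) + k. f j) = (\<Sum>j<m. f j) + (\<Sum>c<k. f (m + c))"
  by (induction k) (simp_all add: add.assoc)

lemma sum_restrict:
  assumes "m \<le> (n::nat)" "\<And>l. l < m \<Longrightarrow> f l = g l" "\<And>l. m \<le> l \<Longrightarrow> l < n \<Longrightarrow> f l = 0"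
  shows "sum f {..<n} = sum g {..<m}"
proof -
  have "sum f {..<n} = sum f {..<m}"
    apply (rule sum.mono_neutral_right)
    using assms not_less by auto
  also have "\<dots> = sum g {..<m}" using assms(2) by simp
  finally show ?thesis .
qed

lemma sum3: "(\<Sum>r\<in>A. a * f r * b) = a * sum f A * (b::'a::ring)"
  by (simp add: sum_distrib_left sum_distrib_right)

definition rho :: "nat \<Rightarrow> nat \<Rightarrow> nat" where "rho k r = (if r = 0 then 0 else r + k)"

lemma sum_rho:
  assumes "\<And>i. i \<noteq> 0 \<Longrightarrow> i < Suc k \<Longrightarrow> f i = 0"
  shows "(\<Sum>i<Suc k + k. f i) = (\<Sum>r<Suc k. f (rho k r))"
proof -
  have inj: "inj_on (rho k) {..<Suc k}" by (auto simp: rho_def inj_on_def split: if_splits)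
  have "(\<Sum>i<Suc k + k. f i) = (\<Sum>i\<in>rho k ` {..<Suc k}. f i)"
  proof (rule sum.mono_neutral_right)
    show "rho k ` {..<Suc k} \<subseteq> {..<Suc k + k}" by (auto simp: rho_def)
    show "\<forall>i\<in>{..<Suc k + k} - rho k ` {..<Suc k}. f i = 0"
    proof
      fix i assume i: "i \<in> {..<Suc k + k} - rho k ` {..<Suc k}"
      have "i \<noteq> 0" using i by (force simp: rho_def)
      moreover have "i < Suc k"
      proof (rule ccontr)
        assume "\<not> i < Suc k"
        then have "i = rho k (i - k)" "i - k < Suc k" using i \<open>i\<noteq>0\<close> by (auto simp: rho_def)
        then show False using i by blast
      qed
      ultimately show "f i = 0" by (rule assms)
    qed
  qed auto
  also have "\<dots> = (\<Sum>r<Suc k. f (rho k r))" by (rule sum.reindex[OF inj, unfolded o_def])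
  finally show ?thesis .
qed

definition col_on :: "nat \<Rightarrow> (nat \<Rightarrow> nat \<Rightarrow> 'a::cstar_algebra) \<Rightarrow> bool" where
  "col_on k W \<longleftrightarrow> (\<forall>a<Suc k. \<forall>b<Suc k. (\<Sum>r<Suc k. cstar (W r a) * W r b) = (if a = b then 1 else 0))"
definition row_on :: "nat \<Rightarrow> (nat \<Rightarrow> nat \<Rightarrow> 'a::cstar_algebra) \<Rightarrow> bool" where
  "row_on k W \<longleftrightarrow> (\<forall>r<Suc k. \<forall>s<Suc k. (\<Sum>c<Suc k. W r c * cstar (W s c)) = (if r = s then 1 else 0))"

lemma munitary_col_row:
  assumes "munitary (Suc k) W" shows "col_on k W" "row_on k W"
proof -
  have 1: "mmul (Suc k) (mstar W) W a b = mone (Suc k) a b"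
   and 2: "mmul (Suc k) W (mstar W) a b = mone (Suc k) a b" for a b
    using assms by (auto simp: munitary_def)
  show "col_on k W" unfolding col_on_def
  proof (intro allI impI)
    fix a b assume "a < Suc k" "b < Suc k"
    then show "(\<Sum>r<Suc k. cstar (W r a) * W r b) = (if a = b then 1 else 0)"
      using 1[of a b] by (simp add: mmul_def mstar_def mone_def)
  qed
  show "row_on k W" unfolding row_on_def
  proof (intro allI impI)
    fix a b assume "a < Suc k" "b < Suc k"
    then show "(\<Sum>r<Suc k. W a r * cstar (W b r)) = (if a = b then 1 else 0)"
      using 2[of a b] by (simp add: mmul_def mstar_def mone_def)
  qed
qed

definition pm :: "nat \<Rightarrow> (nat \<Rightarrow> nat \<Rightarrow> 'a::cstar_algebra) \<Rightarrow> nat \<Rightarrow> nat \<Rightarrow> 'a" where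
  "pm k W = (\<lambda>i j. if i < Suc k \<and> j < Suc k then W i 0 * cstar (W j 0) else 0)"
definition em :: "nat \<Rightarrow> nat \<Rightarrow> 'a::cstar_algebra" where
  "em = (\<lambda>i j. if i = 0 \<and> j = 0 then 1 else 0)"
definition rm :: "nat \<Rightarrow> nat \<Rightarrow> nat \<Rightarrow> 'a::cstar_algebra" where
  "rm k = (\<lambda>i j. if i = j \<and> Suc k \<le> i \<and> i < Suc k + k then 1 else 0)"
definition xm :: "nat \<Rightarrow> (nat \<Rightarrow> nat \<Rightarrow> 'a::cstar_algebra) \<Rightarrow> nat \<Rightarrow> nat \<Rightarrow> 'a" where
  "xm k W r j = (if j < Suc k then W r 0 * cstar (W j 0) else W r (j - k))"
definition vm :: "nat \<Rightarrow> (nat \<Rightarrow> nat \<Rightarrow> 'a::cstar_algebra) \<Rightarrow> nat \<Rightarrow> nat \<Rightarrow> 'a" where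
  "vm k W = (\<lambda>i j. if j < Suc k + k \<and> (i = 0 \<or> (Suc k \<le> i \<and> i < Suc k + k))
                    then xm k W (if i = 0 then 0 else i - k) j else 0)"

lemma vm_rho: "r < Suc k \<Longrightarrow> vm k W (rho k r) j = (if j < Suc k + k then xm k W r j else 0)"
  by (auto simp: vm_def rho_def)

lemma vm_mid: "i \<noteq> 0 \<Longrightarrow> i < Suc k \<Longrightarrow> vm k W i j = 0"
  by (auto simp: vm_def)

lemma pm_idem:
  assumes "col_on k W" shows "mmul (Suc k + k) (pm k W) (pm k W) = pm k W"
proof (intro ext)
  fix i j
  show "mmul (Suc k + k) (pm k W) (pm k W) i j = pm k W i j"
  proof (cases "i < Suc k \<and> j < Suc k")
    case True
    have "mmul (Suc k + k) (pm k W) (pm k W) i j = (\<Sum>l<Suc k + k. pm k W i l * pm k W l j)"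
      using True by (simp add: mmul_def)
    also have "\<dots> = (\<Sum>l<Suc k. W i 0 * cstar (W l 0) * W l 0 * cstar (W j 0))"
      by (rule sum_restrict) (auto simp: pm_def True mult.assoc)
    also have "\<dots> = W i 0 * (\<Sum>l<Suc k. cstar (W l 0) * W l 0) * cstar (W j 0)"
      unfolding sum3[symmetric] by (simp add: mult.assoc)
    also have "\<dots> = pm k W i j" using assms True by (simp add: col_on_def pm_def)
    finally show ?thesis .
  qed (auto simp: mmul_def pm_def)
qed

lemma pm_star: "mstar (pm k W) = pm k W"
  by (intro ext) (auto simp: mstar_def pm_def cstar_mult cstar_cstar)

lemma pm_mat: "pm k W \<in> mat (Suc k + k)"
  by (auto simp: mat_def pm_def)
lemma em_mat: "(em :: nat \<Rightarrow> nat \<Rightarrow> 'a::cstar_algebra) \<in> mat (Suc k + k)"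
  by (auto simp: mat_def em_def)
lemma rm_mat: "(rm k :: nat \<Rightarrow> nat \<Rightarrow> 'a::cstar_algebra) \<in> mat (Suc k + k)"
  by (auto simp: mat_def rm_def)
lemma vm_mat: "vm k W \<in> mat (Suc k + k)"
  by (auto simp: mat_def vm_def)

lemma em_star: "mstar em = (em :: nat \<Rightarrow> nat \<Rightarrow> 'a::cstar_algebra)"
  by (intro ext) (auto simp: mstar_def em_def)
lemma rm_star: "mstar (rm k) = (rm k :: nat \<Rightarrow> nat \<Rightarrow> 'a::cstar_algebra)"
  by (intro ext) (auto simp: mstar_def rm_def)

definition dg :: "(nat \<Rightarrow> bool) \<Rightarrow> nat \<Rightarrow> nat \<Rightarrow> 'a::cstar_algebra" where
  "dg T = (\<lambda>i j. if i = j \<and> T i then 1 else 0)"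

lemma mmul_dg_right: "mmul n M (dg T) i j = (if i < n \<and> j < n \<and> T j then M i j else 0)"
proof (cases "i < n \<and> j < n")
  case True
  have "mmul n M (dg T) i j = (\<Sum>l<n. M i l * dg T l j)" using True by (simp add: mmul_def)
  also have "\<dots> = (\<Sum>l<n. if l = j then (if T j then M i j else 0) else 0)"
    by (rule sum.cong) (auto simp: dg_def)
  also have "\<dots> = (if T j then M i j else 0)" using True by (subst sum.delta) auto
  finally show ?thesis using True by simp
qed (auto simp: mmul_def)

lemma mmul_dg_left: "mmul n (dg S) M i j = (if i < n \<and> j < n \<and> S i then M i j else 0)"
proof (cases "i < n \<and> j < n")
  case True
  have "mmul n (dg S) M i j = (\<Sum>l<n. dg S i l * M l j)" using True by (simp add: mmul_def)
  also have "\<dots> = (\<Sum>l<n. if l = i then (if S i then M i j else 0) else 0)"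
    by (rule sum.cong) (auto simp: dg_def)
  also have "\<dots> = (if S i then M i j else 0)" using True by (subst sum.delta) auto
  finally show ?thesis using True by simp
qed (auto simp: mmul_def)

lemma em_dg: "em = dg (\<lambda>i. i = 0)" by (intro ext) (auto simp: em_def dg_def)
lemma rm_dg: "rm k = dg (\<lambda>i. Suc k \<le> i \<and> i < Suc k + k)" by (intro ext) (auto simp: rm_def dg_def)

lemma em_idem: "mmul (Suc k + k) em em = (em :: nat \<Rightarrow> nat \<Rightarrow> 'a::cstar_algebra)"
  by (intro ext) (simp add: mmul_dg_right em_dg, auto simp: dg_def)

lemma rm_idem: "mmul (Suc k + k) (rm k) (rm k) = (rm k :: nat \<Rightarrow> nat \<Rightarrow> 'a::cstar_algebra)"
  by (intro ext) (simp add: mmul_dg_right rm_dg, auto simp: dg_def)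

lemma em_rm: "mmul (Suc k + k) em (rm k) = (\<lambda>i j. 0 :: 'a::cstar_algebra)"
  by (intro ext) (simp add: mmul_dg_right rm_dg, auto simp: em_def)

lemma pm_rm: "mmul (Suc k + k) (pm k W) (rm k) = (\<lambda>i j. 0)"
  by (intro ext) (simp add: mmul_dg_right rm_dg, auto simp: pm_def)



lemma xm_cross:
  assumes col: "col_on k W" and j: "j < Suc k + k" and l: "l < Suc k + k"
  shows "(\<Sum>r<Suc k. cstar (xm k W r j) * xm k W r l) = madd (pm k W) (rm k) j l"
proof -
  have C: "\<And>a b. a < Suc k \<Longrightarrow> b < Suc k \<Longrightarrow> (\<Sum>r<Suc k. cstar (W r a) * W r b) = (if a = b then 1 else 0)"
    using col by (simp add: col_on_def)
  consider "j < Suc k" "l < Suc k" | "j < Suc k" "\<not> l < Suc k" | "\<not> j < Suc k" "l < Suc k"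
    | "\<not> j < Suc k" "\<not> l < Suc k" by blast
  then show ?thesis
  proof cases
    case 1
    have "(\<Sum>r<Suc k. cstar (xm k W r j) * xm k W r l) = (\<Sum>r<Suc k. W j 0 * cstar (W r 0) * W r 0 * cstar (W l 0))"
      using 1 by (intro sum.cong) (auto simp: xm_def cstar_mult cstar_cstar mult.assoc)
    also have "\<dots> = W j 0 * (\<Sum>r<Suc k. cstar (W r 0) * W r 0) * cstar (W l 0)"
      unfolding sum3[symmetric] by (simp add: mult.assoc)
    also have "\<dots> = madd (pm k W) (rm k) j l" using 1 C[of 0 0] by (simp add: madd_def pm_def rm_def)
    finally show ?thesis .
  next
    case 2
    have "(\<Sum>r<Suc k. cstar (xm k W r j) * xm k W r l) = (\<Sum>r<Suc k. W j 0 * (cstar (W r 0) * W r (l - k)))"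
      using 2 by (intro sum.cong) (auto simp: xm_def cstar_mult cstar_cstar mult.assoc)
    also have "\<dots> = W j 0 * (\<Sum>r<Suc k. cstar (W r 0) * W r (l - k))"
      by (rule sum_distrib_left[symmetric])
    also have "\<dots> = 0" using 2 l C[of 0 "l - k"] by simp
    also have "\<dots> = madd (pm k W) (rm k) j l" using 2 by (simp add: madd_def pm_def rm_def)
    finally show ?thesis .
  next
    case 3
    have "(\<Sum>r<Suc k. cstar (xm k W r j) * xm k W r l) = (\<Sum>r<Suc k. cstar (W r (j - k)) * W r 0 * cstar (W l 0))"
      using 3 by (intro sum.cong) (auto simp: xm_def mult.assoc)
    also have "\<dots> = (\<Sum>r<Suc k. cstar (W r (j - k)) * W r 0) * cstar (W l 0)"
      by (rule sum_distrib_right[symmetric])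
    also have "\<dots> = 0" using 3 j C[of "j - k" 0] by simp
    also have "\<dots> = madd (pm k W) (rm k) j l" using 3 by (simp add: madd_def pm_def rm_def)
    finally show ?thesis .
  next
    case 4
    have "(\<Sum>r<Suc k. cstar (xm k W r j) * xm k W r l) = (\<Sum>r<Suc k. cstar (W r (j - k)) * W r (l - k))"
      using 4 by (intro sum.cong) (auto simp: xm_def)
    also have "\<dots> = (if j - k = l - k then 1 else 0)" using 4 j l C[of "j - k" "l - k"] by simp
    also have "\<dots> = madd (pm k W) (rm k) j l" using 4 j l by (auto simp: madd_def pm_def rm_def)
    finally show ?thesis .
  qed
qed

lemma vm_VV:
  assumes col: "col_on k W"
  shows "mmul (Suc k + k) (mstar (vm k W)) (vm k W) = madd (pm k W) (rm k)"
proof (intro ext)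
  fix j l
  show "mmul (Suc k + k) (mstar (vm k W)) (vm k W) j l = madd (pm k W) (rm k) j l"
  proof (cases "j < Suc k + k \<and> l < Suc k + k")
    case True
    have "mmul (Suc k + k) (mstar (vm k W)) (vm k W) j l = (\<Sum>i<Suc k + k. cstar (vm k W i j) * vm k W i l)"
      using True by (simp add: mmul_def mstar_def)
    also have "\<dots> = (\<Sum>r<Suc k. cstar (vm k W (rho k r) j) * vm k W (rho k r) l)"
      by (rule sum_rho) (simp add: vm_mid)
    also have "\<dots> = (\<Sum>r<Suc k. cstar (xm k W r j) * xm k W r l)"
      using True by (intro sum.cong) (auto simp: vm_rho)
    also have "\<dots> = madd (pm k W) (rm k) j l" using xm_cross[OF col] True by blast
    finally show ?thesis .
  qed (auto simp: mmul_def madd_def pm_def rm_def)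
qed

lemma xm_row:
  assumes col: "col_on k W" and row: "row_on k W" and r: "r < Suc k" and s: "s < Suc k"
  shows "(\<Sum>j<Suc k + k. xm k W r j * cstar (xm k W s j)) = (if r = s then 1 else 0)"
proof -
  have "(\<Sum>j<Suc k + k. xm k W r j * cstar (xm k W s j)) =
        (\<Sum>j<Suc k. xm k W r j * cstar (xm k W s j)) + (\<Sum>c<k. xm k W r (Suc k + c) * cstar (xm k W s (Suc k + c)))"
    by (rule sum_split_add)
  also have "(\<Sum>j<Suc k. xm k W r j * cstar (xm k W s j)) = (\<Sum>j<Suc k. W r 0 * cstar (W j 0) * W j 0 * cstar (W s 0))"
    by (intro sum.cong) (auto simp: xm_def cstar_mult cstar_cstar mult.assoc)
  also have "\<dots> = W r 0 * (\<Sum>j<Suc k. cstar (W j 0) * W j 0) * cstar (W s 0)"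
    unfolding sum3[symmetric] by (simp add: mult.assoc)
  also have "\<dots> = W r 0 * cstar (W s 0)" using col by (simp add: col_on_def)
  also have "(\<Sum>c<k. xm k W r (Suc k + c) * cstar (xm k W s (Suc k + c))) = (\<Sum>c<k. W r (Suc c) * cstar (W s (Suc c)))"
    by (intro sum.cong) (auto simp: xm_def)
  also have "W r 0 * cstar (W s 0) + (\<Sum>c<k. W r (Suc c) * cstar (W s (Suc c))) = (\<Sum>c<Suc k. W r c * cstar (W s c))"
    by (rule sum.lessThan_Suc_shift[symmetric])
  also have "\<dots> = (if r = s then 1 else 0)" using row r s by (simp add: row_on_def)
  finally show ?thesis .
qed

lemma rho_cases: "i < Suc k + k \<Longrightarrow> \<not> (i \<noteq> 0 \<and> i < Suc k) \<Longrightarrow> \<exists>r<Suc k. i = rho k r"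
  apply (cases "i = 0")
   apply (rule exI[of _ 0]) apply (simp add: rho_def)
  apply (rule exI[of _ "i - k"]) apply (auto simp: rho_def)
  done

lemma vm_VV':
  assumes col: "col_on k W" and row: "row_on k W"
  shows "mmul (Suc k + k) (vm k W) (mstar (vm k W)) = madd em (rm k)"
proof (intro ext)
  fix i l
  show "mmul (Suc k + k) (vm k W) (mstar (vm k W)) i l = madd em (rm k) i l"
  proof (cases "i < Suc k + k \<and> l < Suc k + k")
    case True
    have eq: "mmul (Suc k + k) (vm k W) (mstar (vm k W)) i l = (\<Sum>j<Suc k + k. vm k W i j * cstar (vm k W l j))"
      using True by (simp add: mmul_def mstar_def)
    show ?thesis
    proof (cases "(i \<noteq> 0 \<and> i < Suc k) \<or> (l \<noteq> 0 \<and> l < Suc k)")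
      case True
      then show ?thesis unfolding eq by (auto simp: vm_mid madd_def em_def rm_def)
    next
      case False
      obtain r where r: "r < Suc k" "i = rho k r" using rho_cases[of i k] False True by blast
      obtain s where s: "s < Suc k" "l = rho k s" using rho_cases[of l k] False True by blast
      have "(\<Sum>j<Suc k + k. vm k W i j * cstar (vm k W l j)) = (\<Sum>j<Suc k + k. xm k W r j * cstar (xm k W s j))"
        using r s by (intro sum.cong) (auto simp: vm_rho)
      also have "\<dots> = (if r = s then 1 else 0)" by (rule xm_row[OF col row r(1) s(1)])
      also have "\<dots> = madd em (rm k) i l"
        using r s by (auto simp: madd_def em_def rm_def rho_def)
      finally show ?thesis using eq by simp
    qed
  qed (auto simp: mmul_def madd_def em_def rm_def)
qed



definition circ :: "(complex \<Rightarrow> nat \<Rightarrow> nat \<Rightarrow> 'a::cstar_algebra) \<Rightarrow> complex \<Rightarrow> nat \<Rightarrow> nat \<Rightarrow> 'a" where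
  "circ F = (\<lambda>z. if z \<in> sphere 0 1 then F z else (\<lambda>i j. 0))"

lemma mmul_zero: "mmul n (\<lambda>i j. 0) (\<lambda>i j. 0) = (\<lambda>i j. (0::'a::cstar_algebra))"
  by (intro ext) (simp add: mmul_def)

lemma ctmul_circ: "ctmul n (circ F) (circ G) = circ (\<lambda>z. mmul n (F z) (G z))"
  by (intro ext) (auto simp: ctmul_def circ_def mmul_def)

lemma ctstar_circ: "ctstar (circ F) = circ (\<lambda>z. mstar (F z))"
  by (intro ext) (auto simp: ctstar_def circ_def mstar_def)

lemma ctadd_circ: "ctadd (circ F) (circ G) = circ (\<lambda>z. madd (F z) (G z))"
  by (intro ext) (auto simp: ctadd_def circ_def madd_def)

lemma circ_eq: "(\<And>z. z \<in> sphere 0 1 \<Longrightarrow> F z = G z) \<Longrightarrow> circ F = circ G"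
  by (intro ext) (auto simp: circ_def)

lemma circ_zero: "circ (\<lambda>z i j. 0) = ctzero"
  by (intro ext) (auto simp: circ_def ctzero_def)

lemma circ_ctmat:
  assumes "\<And>i j. continuous_on (sphere 0 1) (\<lambda>z. F z i j)" "\<And>z. F z \<in> mat n"
  shows "circ F \<in> ctmat n"
  unfolding ctmat_def
proof (intro CollectI conjI allI impI)
  fix i j
  show "continuous_on (sphere 0 1) (\<lambda>z. circ F z i j)"
    using assms(1)[of i j] by (rule continuous_on_eq) (auto simp: circ_def)
next
  fix z :: complex assume "z \<notin> sphere 0 1" then show "circ F z = (\<lambda>i j. 0)" by (simp add: circ_def)
next
  fix z show "circ F z \<in> mat n" using assms(2)[of z] by (auto simp: circ_def mat_def)
qed

lemma cont_if_const: "(c \<Longrightarrow> continuous_on S f) \<Longrightarrow> (\<not> c \<Longrightarrow> continuous_on S g) \<Longrightarrow> continuous_on S (\<lambda>t. if c then f t else g t)"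
  by (cases c) auto

lemma cont_pm:
  assumes "\<And>i j. continuous_on S (\<lambda>t. G t i j)"
  shows "continuous_on S (\<lambda>t. pm k (G t) i j)"
  unfolding pm_def by (intro cont_if_const continuous_intros assms)

lemma cont_vm:
  assumes "\<And>i j. continuous_on S (\<lambda>t. G t i j)"
  shows "continuous_on S (\<lambda>t. vm k (G t) i j)"
  unfolding vm_def xm_def by (intro cont_if_const continuous_intros assms)

lemma stab_col0: "stab u k j 0 = (if j = 0 then u else 0)"
  by (simp add: stab_def mone_def)

lemma pm_stab: "unitary_el u \<Longrightarrow> pm k (stab u k) = em"
  by (intro ext) (auto simp: pm_def em_def stab_col0 unitary_el_def)

lemma xm_stab: "unitary_el u \<Longrightarrow> xm k (stab u k) = xm k (mone (Suc k))"
  by (intro ext) (auto simp: xm_def stab_col0 unitary_el_def stab_def mone_def)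

lemma vm_stab: assumes "unitary_el u" shows "vm k (stab u k) = vm k (mone (Suc k))"
  unfolding vm_def xm_stab[OF assms] ..

lemma unitary_prod: "unitary_el x \<Longrightarrow> unitary_el y \<Longrightarrow> unitary_el (cstar x * y)"
  unfolding unitary_el_def
  by (simp add: cstar_mult cstar_cstar mult.assoc) (metis mult.assoc mult_1_left mult_1_right)



lemma key1:
  assumes col: "col_on k W" and h1: "mmul (Suc k + k) (mstar A) A = pm k W"
    and h2: "mmul (Suc k + k) A (mstar A) = em"
    and j: "j < Suc k" and l: "l < Suc k"
  shows "cstar (A 0 j) * A 0 l = pm k W j l"
proof -
  let ?N = "Suc k + k"
  have "mmul ?N (mmul ?N (mstar A) em) A = mmul ?N (mmul ?N (mstar A) (mmul ?N A (mstar A))) A"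
    unfolding h2 ..
  also have "\<dots> = mmul ?N (mmul ?N (mstar A) A) (mmul ?N (mstar A) A)"
    by (simp add: mmul_assoc)
  also have "\<dots> = pm k W" by (simp only: h1 pm_idem[OF col])
  finally have E: "mmul ?N (mmul ?N (mstar A) em) A j l = pm k W j l" by simp
  have "mmul ?N (mmul ?N (mstar A) em) A j l = (\<Sum>i<?N. mmul ?N (mstar A) em j i * A i l)"
    using j l by (simp add: mmul_def)
  also have "\<dots> = (\<Sum>i<?N. if i = 0 then cstar (A 0 j) * A 0 l else 0)"
    using j by (intro sum.cong) (auto simp: em_dg mmul_dg_right mstar_def)
  also have "\<dots> = cstar (A 0 j) * A 0 l" by simp
  finally show ?thesis using E by simp
qed

lemma key2:
  assumes col: "col_on k W" and h1: "mmul (Suc k + k) (mstar A) A = pm k W"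
    and h2: "mmul (Suc k + k) A (mstar A) = em"
  shows "(\<Sum>j<Suc k. \<Sum>l<Suc k. A 0 j * pm k W j l * cstar (A 0 l)) = 1"
proof -
  let ?N = "Suc k + k"
  have "mmul ?N (mmul ?N A (pm k W)) (mstar A) = mmul ?N (mmul ?N A (mmul ?N (mstar A) A)) (mstar A)"
    unfolding h1 ..
  also have "\<dots> = mmul ?N (mmul ?N A (mstar A)) (mmul ?N A (mstar A))"
    by (simp add: mmul_assoc)
  also have "\<dots> = em" by (simp only: h2 em_idem)
  finally have E: "mmul ?N (mmul ?N A (pm k W)) (mstar A) 0 0 = 1" by (simp add: em_def)
  have "mmul ?N (mmul ?N A (pm k W)) (mstar A) 0 0 = (\<Sum>l<?N. (\<Sum>j<?N. A 0 j * pm k W j l) * cstar (A 0 l))"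
    by (simp add: mmul_def mstar_def)
  also have "\<dots> = (\<Sum>l<Suc k. (\<Sum>j<Suc k. A 0 j * pm k W j l) * cstar (A 0 l))"
  proof (rule sum_restrict)
    fix l assume "l < Suc k"
    then show "(\<Sum>j<?N. A 0 j * pm k W j l) * cstar (A 0 l) = (\<Sum>j<Suc k. A 0 j * pm k W j l) * cstar (A 0 l)"
      by (subst sum_restrict[where m="Suc k"]) (auto simp: pm_def)
  next
    fix l assume "Suc k \<le> l" "l < ?N"
    then show "(\<Sum>j<?N. A 0 j * pm k W j l) * cstar (A 0 l) = 0" by (simp add: pm_def)
  qed simp
  also have "\<dots> = (\<Sum>l<Suc k. \<Sum>j<Suc k. A 0 j * pm k W j l * cstar (A 0 l))"
    by (simp only: sum_distrib_right)
  also have "\<dots> = (\<Sum>j<Suc k. \<Sum>l<Suc k. A 0 j * pm k W j l * cstar (A 0 l))"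
    by (rule sum.swap)
  finally show ?thesis using E by simp
qed

lemma a_unitary:
  assumes col: "col_on k W" and K1: "\<And>j l. j < Suc k \<Longrightarrow> l < Suc k \<Longrightarrow> cstar (A 0 j) * A 0 l = pm k W j l"
    and K2: "(\<Sum>j<Suc k. \<Sum>l<Suc k. A 0 j * pm k W j l * cstar (A 0 l)) = 1"
  shows "unitary_el (\<Sum>j<Suc k. A 0 j * W j 0)"
proof -
  have C: "(\<Sum>r<Suc k. cstar (W r 0) * W r 0) = 1" using col by (simp add: col_on_def)
  have "cstar (\<Sum>j<Suc k. A 0 j * W j 0) * (\<Sum>l<Suc k. A 0 l * W l 0)
        = (\<Sum>j<Suc k. \<Sum>l<Suc k. cstar (W j 0) * (cstar (A 0 j) * A 0 l) * W l 0)"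
    by (simp only: cstar_sum cstar_mult sum_product mult.assoc)
  also have "\<dots> = (\<Sum>j<Suc k. \<Sum>l<Suc k. (cstar (W j 0) * W j 0) * (cstar (W l 0) * W l 0))"
    by (intro sum.cong refl) (simp add: K1 pm_def mult.assoc)
  also have "\<dots> = (\<Sum>j<Suc k. cstar (W j 0) * W j 0) * (\<Sum>l<Suc k. cstar (W l 0) * W l 0)"
    by (rule sum_product[symmetric])
  also have "\<dots> = 1" by (simp only: C mult_1_left)
  finally have 1: "cstar (\<Sum>j<Suc k. A 0 j * W j 0) * (\<Sum>j<Suc k. A 0 j * W j 0) = 1" .
  have "(\<Sum>j<Suc k. A 0 j * W j 0) * cstar (\<Sum>l<Suc k. A 0 l * W l 0)
        = (\<Sum>j<Suc k. \<Sum>l<Suc k. A 0 j * (W j 0 * cstar (W l 0)) * cstar (A 0 l))"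
    by (simp only: cstar_sum cstar_mult sum_product mult.assoc)
  also have "\<dots> = (\<Sum>j<Suc k. \<Sum>l<Suc k. A 0 j * pm k W j l * cstar (A 0 l))"
    by (intro sum.cong refl) (simp add: pm_def)
  also have "\<dots> = 1" by (rule K2)
  finally have 2: "(\<Sum>j<Suc k. A 0 j * W j 0) * cstar (\<Sum>j<Suc k. A 0 j * W j 0) = 1" .
  show ?thesis using 1 2 by (simp add: unitary_el_def)
qed



theorem corollary4p8:
  assumes "CT_cancellation_property TYPE('a::cstar_algebra)"
  shows "K1_injective TYPE('a)"
  unfolding K1_injective_def
proof (intro allI impI)
  fix u v :: 'a
  assume H: "unitary_el u \<and> unitary_el v \<and> (\<exists>k. munitary_homotopic (Suc k) (stab u k) (stab v k))"
  then have uu: "unitary_el u" and vv: "unitary_el v" by auto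
  from H obtain k where "munitary_homotopic (Suc k) (stab u k) (stab v k)" by blast
  then obtain \<gamma> :: "real \<Rightarrow> nat \<Rightarrow> nat \<Rightarrow> 'a" where
    cont: "\<And>i j. continuous_on {0..1} (\<lambda>t. \<gamma> t i j)" and un: "\<And>t. t \<in> {0..1} \<Longrightarrow> munitary (Suc k) (\<gamma> t)"
    and g0: "\<gamma> 0 = stab u k" and g1: "\<gamma> 1 = stab v k"
    unfolding munitary_homotopic_def by blast
  define N where "N = Suc k + k"
  define h where "h = (\<lambda>z::complex. Arg2pi z / (2*pi))"
  have h01: "h z \<in> {0..1}" for z
    using Arg2pi_ge_0[of z] Arg2pi_lt_2pi[of z] by (auto simp: h_def)
  have colh: "col_on k (\<gamma> (h z))" "row_on k (\<gamma> (h z))" for z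
    using munitary_col_row[OF un[OF h01]] by auto
  define Pc where "Pc = circ (\<lambda>z. pm k (\<gamma> (h z)))"
  define Ec where "Ec = circ (\<lambda>z. (em :: nat \<Rightarrow> nat \<Rightarrow> 'a))"
  define Rc where "Rc = circ (\<lambda>z. (rm k :: nat \<Rightarrow> nat \<Rightarrow> 'a))"
  define Vc where "Vc = circ (\<lambda>z. vm k (\<gamma> (h z)))"
  have pm01: "pm k (\<gamma> 0) = pm k (\<gamma> 1)" by (simp add: g0 g1 pm_stab[OF uu] pm_stab[OF vv])
  have vm01: "vm k (\<gamma> 0) = vm k (\<gamma> 1)" by (simp add: g0 g1 vm_stab[OF uu] vm_stab[OF vv])
  have contP: "continuous_on (sphere 0 1) (\<lambda>z. pm k (\<gamma> (h z)) i j)" for i j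
  proof -
    have "continuous_on (sphere 0 1) (\<lambda>z. (\<lambda>t. pm k (\<gamma> t) i j) (Arg2pi z / (2*pi)))"
      by (rule loop_circ) (use cont_pm[OF cont] pm01 in auto)
    then show ?thesis by (simp add: h_def)
  qed
  have contV: "continuous_on (sphere 0 1) (\<lambda>z. vm k (\<gamma> (h z)) i j)" for i j
  proof -
    have "continuous_on (sphere 0 1) (\<lambda>z. (\<lambda>t. vm k (\<gamma> t) i j) (Arg2pi z / (2*pi)))"
      by (rule loop_circ) (use cont_vm[OF cont] vm01 in auto)
    then show ?thesis by (simp add: h_def)
  qed
  have Pmat: "Pc \<in> ctmat N" unfolding Pc_def N_def by (rule circ_ctmat[OF contP pm_mat])
  have Emat: "Ec \<in> ctmat N" unfolding Ec_def N_def by (rule circ_ctmat[OF continuous_on_const em_mat])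
  have Rmat: "Rc \<in> ctmat N" unfolding Rc_def N_def by (rule circ_ctmat[OF continuous_on_const rm_mat])
  have Vmat: "Vc \<in> ctmat N" unfolding Vc_def N_def by (rule circ_ctmat[OF contV vm_mat])
  have projP: "ctprojection N Pc" unfolding ctprojection_def
    using Pmat unfolding Pc_def ctstar_circ ctmul_circ N_def pm_star pm_idem[OF colh(1)] by simp
  have projE: "ctprojection N Ec" unfolding ctprojection_def
    using Emat unfolding Ec_def ctstar_circ ctmul_circ N_def em_star em_idem by simp
  have projR: "ctprojection N Rc" unfolding ctprojection_def
    using Rmat unfolding Rc_def ctstar_circ ctmul_circ N_def rm_star rm_idem by simp
  have PR: "ctmul N Pc Rc = ctzero" unfolding Pc_def Rc_def ctmul_circ N_def pm_rm circ_zero ..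
  have ER: "ctmul N Ec Rc = ctzero" unfolding Ec_def Rc_def ctmul_circ N_def em_rm circ_zero ..
  have mvn: "ctmvn N (ctadd Pc Rc) (ctadd Ec Rc)"
    unfolding ctmvn_def
  proof (rule bexI[OF _ Vmat], rule conjI)
    show "ctmul N (ctstar Vc) Vc = ctadd Pc Rc"
      unfolding Vc_def Pc_def Rc_def ctstar_circ ctmul_circ ctadd_circ N_def vm_VV[OF colh(1)] ..
    show "ctmul N Vc (ctstar Vc) = ctadd Ec Rc"
      unfolding Vc_def Ec_def Rc_def ctstar_circ ctmul_circ ctadd_circ N_def vm_VV'[OF colh(1) colh(2)] ..
  qed
  have "ct_cancellation_n TYPE('a) N" using assms by (simp add: CT_cancellation_property_def N_def)
  then have "ctmvn N Pc Ec" unfolding ct_cancellation_n_def using projP projE projR PR ER mvn by blast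
  then obtain V where Vmat': "V \<in> ctmat N" and VP: "ctmul N (ctstar V) V = Pc" and VE: "ctmul N V (ctstar V) = Ec"
    unfolding ctmvn_def by blast
  have VPz: "mmul N (mstar (V z)) (V z) = pm k (\<gamma> (h z))" if "z \<in> sphere 0 1" for z
    using fun_cong[OF VP, of z] that by (simp add: ctmul_def ctstar_def Pc_def circ_def)
  have VEz: "mmul N (V z) (mstar (V z)) = em" if "z \<in> sphere 0 1" for z
    using fun_cong[OF VE, of z] that by (simp add: ctmul_def ctstar_def Ec_def circ_def)
  have Vcont: "continuous_on (sphere 0 1) (\<lambda>z. V z i j)" for i j using Vmat' by (simp add: ctmat_def)
  define e where "e = (\<lambda>t::real. exp (2 * of_real pi * of_real t * \<i>))"
  have e_sph: "e t \<in> sphere 0 1" for t by (simp add: e_def)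
  have e_cont: "continuous_on {0..1} e" unfolding e_def by (intro continuous_intros)
  have he: "pm k (\<gamma> (h (e t))) = pm k (\<gamma> t)" if "t \<in> {0..1}" for t
    using that Arg_exp_param[of t] pm01 by (auto simp: h_def e_def)
  define a where "a = (\<lambda>t. \<Sum>j<Suc k. V (e t) 0 j * \<gamma> t j 0)"
  have aU: "unitary_el (a t)" if t: "t \<in> {0..1}" for t
  proof -
    have col: "col_on k (\<gamma> t)" using munitary_col_row[OF un[OF t]] by auto
    have h1: "mmul (Suc k + k) (mstar (V (e t))) (V (e t)) = pm k (\<gamma> t)"
      using VPz[OF e_sph] he[OF t] by (simp add: N_def)
    have h2: "mmul (Suc k + k) (V (e t)) (mstar (V (e t))) = em"
      using VEz[OF e_sph] by (simp add: N_def)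
    show ?thesis unfolding a_def
      by (rule a_unitary[where A="V (e t)", OF col key1[OF col h1 h2] key2[OF col h1 h2]])
  qed
  have acont: "continuous_on {0..1} a"
    unfolding a_def
    by (intro continuous_intros continuous_on_compose2[OF Vcont e_cont] cont) (use e_sph in auto)
  have e0: "e 0 = 1" by (simp add: e_def)
  have e1: "e 1 = 1" unfolding e_def by (metis exp_two_pi_i mult.commute mult.right_neutral of_real_1)
  have a0: "a 0 = V 1 0 0 * u" unfolding a_def e0 g0
    by (simp add: sum.lessThan_Suc_shift stab_col0 del: sum.lessThan_Suc)
  have a1: "a 1 = V 1 0 0 * v" unfolding a_def e1 g1
    by (simp add: sum.lessThan_Suc_shift stab_col0 del: sum.lessThan_Suc)
  have cc: "cstar (V 1 0 0) * V 1 0 0 = 1"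
  proof -
    have col: "col_on k (\<gamma> 0)" using munitary_col_row[OF un] by auto
    have h1: "mmul (Suc k + k) (mstar (V (e 0))) (V (e 0)) = pm k (\<gamma> 0)"
      using VPz[OF e_sph] he[of 0] by (simp add: N_def)
    have h2: "mmul (Suc k + k) (V (e 0)) (mstar (V (e 0))) = em"
      using VEz[OF e_sph] by (simp add: N_def)
    have "cstar (V (e 0) 0 0) * V (e 0) 0 0 = pm k (\<gamma> 0) 0 0" by (rule key1[OF col h1 h2]) auto
    then show ?thesis using uu by (simp add: e0 g0 pm_def stab_col0 unitary_el_def)
  qed
  define \<delta> where "\<delta> = (\<lambda>t. cstar (a t) * a 0)"
  show "cstar v * u \<in> U0"
    unfolding U0_def
  proof (intro CollectI conjI exI[of _ \<delta>] ballI)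
    show "unitary_el (cstar v * u)" by (rule unitary_prod[OF vv uu])
    show "continuous_on {0..1} \<delta>" unfolding \<delta>_def by (intro continuous_intros acont)
    show "unitary_el (\<delta> t)" if "t \<in> {0..1}" for t
      unfolding \<delta>_def by (rule unitary_prod) (use aU that in auto)
    show "\<delta> 0 = 1" using aU[of 0] by (simp add: \<delta>_def unitary_el_def)
    have "\<delta> 1 = cstar v * (cstar (V 1 0 0) * V 1 0 0) * u"
      by (simp add: \<delta>_def a0 a1 cstar_mult mult.assoc)
    then show "\<delta> 1 = cstar v * u" by (simp add: cc)
  qed
qed


end
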